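(* For all integers $m\ge 0$ and $n\ge 1$, $$\int_0^{\pi/2}x^{2m}\cos^{2n}(x)\,dx=(2m)!\,\frac{\binom{2n}{n}}{4^n}\sum_{j=0}^m\frac{(-1)^j\,\zeta_n^{\star}(\{2\}_j)}{2^{2j}(2m-2j+1)!}\left(\frac{\pi}{2}\right)^{2m-2j+1}.$$
   Context: For integers $n\ge1$ and $j\ge0$, the multiple harmonic star sum of depth $j$ and weight $2j$ is $\zeta_n^{\star}(\{2\}_j)=\sum_{n\ge k_1\ge\dots\ge k_j\ge1}\prod_{i=1}^j\frac{1}{k_i^2}$, with $\zeta_n^{\star}(\{2\}_0)=1$. *)

theory Defs
  imports "HOL-Analysis.Analysis"
begin

text \<open>Multiple harmonic star sum zeta*_n({2}_j): sum over n >= k_1 >= ... >= k_j >= 1 of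
  prod 1/k_i^2. Index tuples are represented as functions k on {0..<j} (indices shifted by one),
  extensional (k i = 1 outside {0..<j}) so the index set is finite.\<close>
definition zeta_star_2 :: "nat \<Rightarrow> nat \<Rightarrow> real" where
  "zeta_star_2 n j =
     (\<Sum>k\<in>{k. (\<forall>i<j. 1 \<le> k i \<and> k i \<le> n) \<and> (\<forall>i. Suc i < j \<longrightarrow> k (Suc i) \<le> k i)
             \<and> (\<forall>i\<ge>j. k i = 1)}.
        \<Prod>i<j. 1 / (real (k i))^2)"

end

theory Submission
  imports Defs
begin


definition ZS :: "nat \<Rightarrow> nat \<Rightarrow> (nat \<Rightarrow> nat) set" where
 "ZS n j = {k. (\<forall>i<j. 1 \<le> k i \<and> k i \<le> n) \<and> (\<forall>i. Suc i < j \<longrightarrow> k (Suc i) \<le> k i)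
             \<and> (\<forall>i\<ge>j. k i = 1)}"

lemma zeta_ZS: "zeta_star_2 n j = (\<Sum>k\<in>ZS n j. \<Prod>i<j. 1 / (real (k i))^2)"
  unfolding zeta_star_2_def ZS_def by simp

lemma finite_ZS: "finite (ZS n j)"
proof -
  have "ZS n j \<subseteq> {f. \<forall>x. (x \<in> {..<j} \<longrightarrow> f x \<in> {1..n}) \<and> (x \<notin> {..<j} \<longrightarrow> f x = 1)}"
    unfolding ZS_def by auto
  then show ?thesis using finite_subset finite_set_of_finite_funs[of "{..<j}" "{1..n}" 1] by blast
qed

lemma ZS_0: "ZS n 0 = {\<lambda>_. 1}"
  unfolding ZS_def by auto

lemma zeta_n0: "zeta_star_2 n 0 = 1"
  by (simp add: zeta_ZS ZS_0)

lemma zeta_0Suc: "zeta_star_2 0 (Suc j) = 0"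
proof -
  have "ZS 0 (Suc j) = {}" unfolding ZS_def by auto
  then show ?thesis by (simp add: zeta_ZS)
qed

lemma zeta_rec: "zeta_star_2 (Suc n) (Suc j) = zeta_star_2 n (Suc j) + zeta_star_2 (Suc n) j / (real (Suc n))^2"
proof -
  let ?g = "\<lambda>j k. \<Prod>i<j. 1 / (real (k i))^2"
  let ?A = "{k \<in> ZS (Suc n) (Suc j). k 0 = Suc n}"
  let ?B = "{k \<in> ZS (Suc n) (Suc j). k 0 \<noteq> Suc n}"
  have fin: "finite (ZS (Suc n) (Suc j))" by (rule finite_ZS)
  have un: "ZS (Suc n) (Suc j) = ?A \<union> ?B" by auto
  have split: "(\<Sum>k\<in>ZS (Suc n) (Suc j). ?g (Suc j) k) = (\<Sum>k\<in>?A. ?g (Suc j) k) + (\<Sum>k\<in>?B. ?g (Suc j) k)"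
    by (subst un, rule sum.union_disjoint) (use fin in auto)
  have mono: "k i \<le> k 0" if "k \<in> ZS m l" "i < l" for k m l i
    using that(2)
  proof (induction i)
    case (Suc i)
    then have "k (Suc i) \<le> k i" using that(1) unfolding ZS_def by auto
    then show ?case using Suc by auto
  qed simp
  have B: "?B = ZS n (Suc j)"
  proof
    show "?B \<subseteq> ZS n (Suc j)"
    proof
      fix k assume k: "k \<in> ?B"
      then have "k 0 \<le> n" unfolding ZS_def by force
      then have "k i \<le> n" if "i < Suc j" for i using mono[of k "Suc n" "Suc j" i] k that by auto
      then show "k \<in> ZS n (Suc j)" using k unfolding ZS_def by auto
    qed
  next
    show "ZS n (Suc j) \<subseteq> ?B" unfolding ZS_def by auto
  qed
  have A: "(\<Sum>k\<in>?A. ?g (Suc j) k) = (\<Sum>k\<in>ZS (Suc n) j. ?g j k / (real (Suc n))^2)"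
  proof (rule sum.reindex_bij_witness[where i="\<lambda>k'. case_nat (Suc n) k'" and j="\<lambda>k i. k (Suc i)"])
    fix a assume "a \<in> ?A"
    then show "case_nat (Suc n) (\<lambda>i. a (Suc i)) = a" by (auto split: nat.split)
  next
    fix a assume "a \<in> ?A"
    then show "(\<lambda>i. a (Suc i)) \<in> ZS (Suc n) j" unfolding ZS_def by auto
  next
    fix b assume "b \<in> ZS (Suc n) j"
    show "(\<lambda>i. case_nat (Suc n) b (Suc i)) = b" by simp
  next
    fix b assume b: "b \<in> ZS (Suc n) j"
    show "case_nat (Suc n) b \<in> ?A"
      using b unfolding ZS_def
      apply (auto split: nat.split)
      done
  next
    fix a assume "a \<in> ?A"
    then have "a 0 = Suc n" by simp
    then show "?g j (\<lambda>i. a (Suc i)) / (real (Suc n))^2 = ?g (Suc j) a"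
      by (simp only: prod.lessThan_Suc_shift) (simp add: field_simps)
  qed
  show ?thesis
    unfolding zeta_ZS split A B by (simp add: sum_divide_distrib)
qed

lemma aux: fixes s c X C x P Q :: real assumes "s * s = 1 - c * c" shows "((2 + 2 * P) * (x * X) * (- 2 - 2 * Q) *
      (c * C) - (1 + 2 * Q) * (s * C) * ((- 2 - 2 * Q) * (x * (x * X)))) * s +
     (c * ((- 2 - 2 * Q) * (x * (x * X)) * (c * C)) + (2 + 2 * Q) * (s * (c * C)) * ((2 + 2 * P) * (x * X))) =
     (2 + 2 * Q) * (1 + 2 * Q) * (x * (x * X) * C) - 4 * (1 + Q)^2 * (x * (x * X) * (c * (c * C)))"
  using assms by algebra

lemma auxD: "((\<lambda>x. -2*real (q+1) * x^(2*p+2) * cos x^(2*q+1) * sin x - 2*real(p+1) * x^(2*p+1) * cos x ^(2*q+2))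
  has_real_derivative
  (2*real(q+1)*(2*q+1) * (x^(2*(p+1)) * cos x^(2*q)) - 2*real(p+1)*(2*p+1) * (x^(2*p) * cos x^(2*(q+1)))
   - 4*real(q+1)^2 * (x^(2*(p+1)) * cos x^(2*(q+1))))) (at x)"
proof -
  have s: "sin x * sin x = 1 - cos x * cos x" using sin_squared_eq[of x] by (simp add: power2_eq_square)
  show ?thesis
  apply (rule derivative_eq_intros refl)+
  apply (simp add: power_add power_Suc)
  by (rule aux[OF s])
qed

lemma aux0: fixes s c C Q :: real assumes "s * s = 1 - c * c" shows "c * ((- 2 - 2 * Q) * (c * C)) -
     (1 + 2 * Q) * (s * C) * (- 2 - 2 * Q) * s =
     (2 + 2 * Q) * (1 + 2 * Q) * C - 4 * (1 + Q)^2 * (c * (c * C))"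
  using assms by algebra

lemma auxD0: "((\<lambda>x. -2*real (q+1) * cos x^(2*q+1) * sin x)
  has_real_derivative
  (2*real(q+1)*(2*q+1) * (x^(2*0) * cos x^(2*q)) - 4*real(q+1)^2 * (x^(2*0) * cos x^(2*(q+1))))) (at x)"
proof -
  have s: "sin x * sin x = 1 - cos x * cos x" using sin_squared_eq[of x] by (simp add: power2_eq_square)
  show ?thesis
  apply (rule derivative_eq_intros refl)+
  apply (simp add: power_add power_Suc)
  by (rule aux0[OF s])
qed

definition II :: "nat \<Rightarrow> nat \<Rightarrow> real" where
  "II m n = integral {0..pi/2} (\<lambda>x. x^(2*m) * cos x^(2*n))"

lemma hasI: "((\<lambda>x. x^(2*m) * cos x^(2*n)) has_integral II m n) {0..pi/2}"
  unfolding II_def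
  by (intro integrable_integral integrable_continuous_interval continuous_intros)

lemma ftc0:
  assumes "\<And>x. (G has_real_derivative g x) (at x)" "G 0 = 0" "G (pi/2) = 0"
  shows "(g has_integral 0) {0..pi/2}"
proof -
  have "(g has_integral G (pi/2) - G 0) {0..pi/2}"
    by (rule fundamental_theorem_of_calculus)
       (use assms(1) in \<open>auto simp: has_real_derivative_iff_has_vector_derivative[symmetric] intro: has_field_derivative_at_within\<close>)
  then show ?thesis using assms by simp
qed

lemma recI:
  "4*real(q+1)^2 * II (p+1) (q+1) = 2*real(q+1)*(2*q+1) * II (p+1) q - 2*real(p+1)*(2*p+1) * II p (q+1)"
proof -
  have "((\<lambda>x. 2*real(q+1)*(2*q+1) * (x^(2*(p+1)) * cos x^(2*q)) - 2*real(p+1)*(2*p+1) * (x^(2*p) * cos x^(2*(q+1)))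
   - 4*real(q+1)^2 * (x^(2*(p+1)) * cos x^(2*(q+1)))) has_integral 0) {0..pi/2}"
    by (rule ftc0[OF auxD]) auto
  moreover have "((\<lambda>x. 2*real(q+1)*(2*q+1) * (x^(2*(p+1)) * cos x^(2*q)) - 2*real(p+1)*(2*p+1) * (x^(2*p) * cos x^(2*(q+1)))
   - 4*real(q+1)^2 * (x^(2*(p+1)) * cos x^(2*(q+1)))) has_integral
     (2*real(q+1)*(2*q+1) * II (p+1) q - 2*real(p+1)*(2*p+1) * II p (q+1) - 4*real(q+1)^2 * II (p+1) (q+1))) {0..pi/2}" (is "(_ has_integral ?v) _")
    by (intro has_integral_diff has_integral_mult_right hasI)
  ultimately have "0 = ?v" by (rule has_integral_unique)
  then show ?thesis by linarith
qed

lemma recI0: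
  "4*real(q+1)^2 * II 0 (q+1) = 2*real(q+1)*(2*q+1) * II 0 q"
proof -
  have "((\<lambda>x. 2*real(q+1)*(2*q+1) * (x^(2*0) * cos x^(2*q)) - 4*real(q+1)^2 * (x^(2*0) * cos x^(2*(q+1)))) has_integral 0) {0..pi/2}"
    by (rule ftc0[OF auxD0]) auto
  moreover have "((\<lambda>x. 2*real(q+1)*(2*q+1) * (x^(2*0) * cos x^(2*q)) - 4*real(q+1)^2 * (x^(2*0) * cos x^(2*(q+1)))) has_integral
     (2*real(q+1)*(2*q+1) * II 0 q - 4*real(q+1)^2 * II 0 (q+1))) {0..pi/2}" (is "(_ has_integral ?v) _")
    by (intro has_integral_diff has_integral_mult_right hasI)
  ultimately have "0 = ?v" by (rule has_integral_unique)
  then show ?thesis by linarith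
qed

lemma I_n0: "II m 0 = (pi/2)^(2*m+1) / (2*m+1)"
proof -
  have d: "((\<lambda>x. x^Suc(2*m) / real (Suc (2*m))) has_real_derivative x^(2*m)) (at x within {0..pi/2})" for x
    by (rule derivative_eq_intros refl | simp)+
  have "((\<lambda>x. x^(2*m)) has_integral ((pi/2)^Suc(2*m) / real (Suc(2*m)) - 0^Suc(2*m)/real (Suc(2*m)))) {0..pi/2}"
    by (rule fundamental_theorem_of_calculus) (use d in \<open>auto simp: has_real_derivative_iff_has_vector_derivative[symmetric]\<close>)
  then show ?thesis unfolding II_def by (simp add: integral_unique)
qed


definition SS :: "nat \<Rightarrow> nat \<Rightarrow> real" where
  "SS m n = (\<Sum>j=0..m. (-1) ^ j * zeta_star_2 n j / (2 ^ (2*j) * fact (2*m - 2*j + 1))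
                 * (pi/2) ^ (2*m - 2*j + 1))"


lemma SS_0: "SS 0 n = pi/2"
  by (simp add: SS_def zeta_n0)

lemma SS_n0: "SS m 0 = (pi/2)^(2*m+1) / fact (2*m+1)"
proof -
  have "SS m 0 = (\<Sum>j\<in>{0}. (-1) ^ j * zeta_star_2 0 j / (2 ^ (2*j) * fact (2*m - 2*j + 1))
                 * (pi/2) ^ (2*m - 2*j + 1))"
    unfolding SS_def
    apply (rule sum.mono_neutral_right)
    apply auto
    by (metis not0_implies_Suc zeta_0Suc)
  then show ?thesis by (simp add: zeta_n0)
qed

lemma t_alg:
  fixes a b Q F P :: real
  assumes "Q \<noteq> 0" "F \<noteq> 0"
  shows "(-1)^(Suc j) * (a + b/Q) / (2^(2*Suc j) * F) * P
     = (-1)^(Suc j) * a / (2^(2*Suc j)*F) * P - ((-1)^j * b / (2^(2*j)*F) * P) / (4*Q)"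
proof -
  have "(2::real)^(2*Suc j) = 4 * 2^(2*j)" by (simp add: power_add)
  then show ?thesis using assms by (simp add: field_simps)
qed

lemma SS_rec: "SS (Suc p) (Suc q) = SS (Suc p) q - SS p (Suc q) / (4 * real (Suc q)^2)"
proof -
  define g where "g n j = (-1) ^ j * zeta_star_2 n j / (2 ^ (2*j) * fact (2*Suc p - 2*j + 1))
                 * (pi/2) ^ (2*Suc p - 2*j + 1)" for n j
  define T where "T j = (-1) ^ j * zeta_star_2 (Suc q) j / (2 ^ (2*j) * fact (2*p - 2*j + 1))
                 * (pi/2) ^ (2*p - 2*j + 1)" for j
  have e1: "SS (Suc p) n = g n 0 + (\<Sum>j=0..p. g n (Suc j))" for n
    unfolding SS_def g_def by (subst sum.atLeast0_atMost_Suc_shift) simp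
  have e2: "SS p (Suc q) = (\<Sum>j=0..p. T j)" unfolding SS_def T_def by simp
  have t: "g (Suc q) (Suc j) = g q (Suc j) - T j / (4 * real (Suc q)^2)" if "j \<le> p" for j
  proof -
    have ex: "2 * Suc p - 2 * Suc j + 1 = 2*p - 2*j + 1" by simp
    show ?thesis unfolding g_def T_def ex zeta_rec
      by (rule t_alg) simp_all
  qed
  have "SS (Suc p) (Suc q) = g q 0 + (\<Sum>j=0..p. g q (Suc j) - T j / (4 * real (Suc q)^2))"
  proof -
    have "g (Suc q) 0 = g q 0" unfolding g_def by (simp add: zeta_n0)
    moreover have "(\<Sum>j=0..p. g (Suc q) (Suc j)) = (\<Sum>j=0..p. g q (Suc j) - T j / (4 * real (Suc q)^2))"
      by (rule sum.cong) (simp_all add: t)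
    ultimately show ?thesis unfolding e1 by simp
  qed
  also have "\<dots> = SS (Suc p) q - SS p (Suc q) / (4 * real (Suc q)^2)"
    unfolding e1 e2 by (simp add: sum_subtractf sum_divide_distrib)
  finally show ?thesis .
qed

lemma c_alg: fixes C A B S q :: real
  assumes "C*S = (2*q+2)*A" "(1+2*q)*B = A*S" "S = q+1"
  shows "C*S = 2*(2*q+1)*B"
  using assms by algebra

lemma c_rec: "4 * real (Suc q)^2 * (real ((2*Suc q) choose Suc q) / 4 ^ Suc q)
   = 2 * real (Suc q) * (2*q+1) * (real ((2*q) choose q) / 4 ^ q)"
proof -
  have a: "Suc (Suc (2*q)) * (Suc (2*q) choose q) = (Suc (Suc (2*q)) choose Suc q) * Suc q"
    by (rule Suc_times_binomial_eq)
  have b: "Suc (2*q) * (2*q choose q) = (Suc (2*q) choose Suc q) * Suc q"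
    by (rule Suc_times_binomial_eq)
  have c: "(Suc (2*q) choose q) = (Suc (2*q) choose Suc q)"
    using binomial_symmetric[of q "Suc (2*q)"] by simp
  define A where "A = (Suc (2*q) choose Suc q)"
  define B where "B = (2*q choose q)"
  define C where "C = ((2*Suc q) choose Suc q)"
  have a': "real C * real (Suc q) = (2*real q+2) * real A"
  proof -
    have "2*Suc q = Suc (Suc (2*q))" by simp
    then have "C * Suc q = Suc (Suc (2*q)) * A" unfolding C_def A_def using a c by (simp del: binomial_Suc_Suc)
    then have "real C * real (Suc q) = real (Suc (Suc (2*q))) * real A" by (metis of_nat_mult)
    then show ?thesis by simp
  qed
  have b': "(1+2*real q) * real B = real A * real (Suc q)"
  proof -
    have "Suc (2*q) * B = A * Suc q" unfolding A_def B_def using b by (simp del: binomial_Suc_Suc)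
    then have "real (Suc (2*q)) * real B = real A * real (Suc q)" by (metis of_nat_mult)
    then show ?thesis by simp
  qed
  have "real C * real (Suc q) = 2 * (2*real q+1) * real B"
    by (rule c_alg[OF a' b']) simp
  then have e: "real ((2*Suc q) choose Suc q) * real (Suc q) = 2 * (2*real q+1) * real ((2*q) choose q)"
    unfolding C_def B_def .
  have "4 * real (Suc q)^2 * (real ((2*Suc q) choose Suc q) / 4 ^ Suc q)
     = real (Suc q) * (real ((2*Suc q) choose Suc q) * real (Suc q)) / 4 ^ q"
    by (simp add: power2_eq_square)
  also have "\<dots> = real (Suc q) * (2 * (2*real q+1) * real ((2*q) choose q)) / 4 ^ q"
    by (simp only: e)
  also have "\<dots> = 2 * real (Suc q) * (2*q+1) * (real ((2*q) choose q) / 4 ^ q)"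
    by (simp add: algebra_simps add_divide_distrib)
  finally show ?thesis .
qed

lemma main_all: "II m n = fact(2*m) * (real((2*n) choose n)/4^n) * SS m n"
proof (induction n arbitrary: m)
  case 0
  have f: "fact (2*m+1) = (2*real m+1) * (fact (2*m) :: real)"
    by (metis fact_Suc of_nat_Suc Suc_eq_plus1 of_nat_mult of_nat_numeral add.commute mult_2 of_nat_add)
  have "fact (2*m) \<noteq> (0::real)" by simp
  then show ?case by (simp add: I_n0 SS_n0 f)
next
  case (Suc q)
  define c0 where "c0 = real((2*q) choose q)/4^q"
  define c1 where "c1 = real((2*Suc q) choose Suc q)/4^Suc q"
  have IHq: "II m q = fact(2*m) * c0 * SS m q" for m using Suc.IH unfolding c0_def .
  define K where "K = 4 * real (Suc q)^2"
  have K: "K \<noteq> 0" unfolding K_def by simp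
  have cr: "K * c1 = 2 * real (Suc q) * (2*q+1) * c0"
    unfolding K_def c0_def c1_def by (rule c_rec)
  have "II m (Suc q) = fact(2*m) * c1 * SS m (Suc q)"
  proof (induction m)
    case 0
    have "K * II 0 (Suc q) = 2*real(Suc q)*(2*q+1) * II 0 q"
      using recI0[of q] unfolding K_def by simp
    also have "\<dots> = 2*real(Suc q)*(2*q+1) * c0 * (pi/2)"
      by (simp add: IHq SS_0)
    also have "\<dots> = (K*c1) * (pi/2)" by (simp only: cr)
    also have "\<dots> = K * (fact(2*0) * c1 * SS 0 (Suc q))"
      by (simp add: SS_0)
    finally show ?case using K by simp
  next
    case (Suc p)
    have f: "fact (2*Suc p) = (2*real p + 2) * (2*real p+1) * (fact (2*p) :: real)"
    proof -
      have "2 * Suc p = Suc (Suc (2*p))" by simp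
      then show ?thesis by (simp add: algebra_simps)
    qed
    have "K * II (Suc p) (Suc q) = 2*real(Suc q)*(2*q+1) * II (Suc p) q - 2*real(Suc p)*(2*p+1) * II p (Suc q)"
      using recI[of q p] unfolding K_def by simp
    also have "\<dots> = 2*real(Suc q)*(2*q+1) * c0 * fact(2*Suc p) * SS (Suc p) q
        - 2*real(Suc p)*(2*p+1) * fact(2*p) * c1 * SS p (Suc q)"
      using IHq[of "Suc p"] Suc.IH by simp
    also have "\<dots> = K * c1 * fact(2*Suc p) * SS (Suc p) q
        - fact(2*Suc p) * c1 * SS p (Suc q)"
      unfolding cr f by (simp add: algebra_simps)
    also have "\<dots> = K * (fact(2*Suc p) * c1 * SS (Suc p) (Suc q))"
      unfolding SS_rec K_def[symmetric] using K by (simp add: field_simps)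
    finally show ?case using K by simp
  qed
  then show ?case unfolding c1_def .
qed

theorem mainTheorem11:
  fixes m n :: nat
  assumes "n \<ge> 1"
  shows "integral {0..pi/2} (\<lambda>x. x ^ (2*m) * cos x ^ (2*n)) =
    fact (2*m) * (real ((2*n) choose n) / 4 ^ n) *
    (\<Sum>j=0..m. (-1) ^ j * zeta_star_2 n j / (2 ^ (2*j) * fact (2*m - 2*j + 1))
                 * (pi/2) ^ (2*m - 2*j + 1))"
  using main_all[of m n] unfolding II_def SS_def .

end
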